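(* Let $(\Omega(\mathcal{A}),d)$ be a differential calculus on a complex algebra $\mathcal{A}$ with $\mathcal{E}=\Omega^1(\mathcal{A})$ a finitely generated projective right $\mathcal{A}$-module satisfying: (1) $\mathcal{E}=\mathcal{Z}(\mathcal{E})\otimes_{\mathcal{Z}(\mathcal{A})}\mathcal{A}$; (2) $\mathcal{E}\otimes_{\mathcal{A}}\mathcal{E}=\ker(\wedge)\oplus\mathcal{F}$ with $\mathcal{F}$ a right submodule and $Q=\wedge|_{\mathcal{F}}:\mathcal{F}\to\Omega^2(\mathcal{A})$ a right $\mathcal{A}$-linear isomorphism; (3) $\sigma(\omega\otimes_{\mathcal{A}}\eta)=\eta\otimes_{\mathcal{A}}\omega$ for all $\omega,\eta\in\mathcal{Z}(\mathcal{E})$. Let $\nabla_0$ be as in the context. Then: (a) if $\omega\in\mathcal{Z}(\mathcal{E})$ then $d\omega\in\mathcal{Z}(\Omega^2(\mathcal{A}))$; (b) if $\omega\in\mathcal{Z}(\mathcal{E})$ then $(1-\sigma)\nabla_0(\omega)\in\mathcal{Z}(\mathcal{E}\otimes_{\mathcal{A}}\mathcal{E})$.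
   Context: A differential calculus: $\Omega(\mathcal{A})=\oplus_{j\ge0}\Omega^j(\mathcal{A})$, $\Omega^0=\mathcal{A}$, bimodules $\Omega^j$, an $\mathcal{A}$-bimodule product $\wedge$ adding degrees, $d$ of degree one with $d^2=0$ and $d(\omega\wedge\eta)=d\omega\wedge\eta+(-1)^{\deg\omega}\omega\wedge d\eta$, $\Omega^j$ right-spanned by $da_0\wedge\cdots\wedge da_{j-1}$. $\wedge:\mathcal{E}\otimes_{\mathcal{A}}\mathcal{E}\to\Omega^2(\mathcal{A})$ is the induced product; $P_{\rm sym}$ the idempotent with image $\ker\wedge$ and kernel $\mathcal{F}$; $\sigma=2P_{\rm sym}-1$. $\mathcal{Z}(\mathcal{M})=\{m:am=ma\ \forall a\in\mathcal{A}\}$ for a bimodule $\mathcal{M}$. A connection is a $\mathbb{C}$-linear $\nabla:\mathcal{E}\to\mathcal{E}\otimes_{\mathcal{A}}\mathcal{E}$ with $\nabla(\omega a)=\nabla(\omega)a+\omega\otimes_{\mathcal{A}}da$. With an idempotent $p\in M_n(\mathcal{A})$, $p(\mathcal{A}^n)=\mathcal{E}$, $\Phi_j=p(e_j)$, the Grassmann connection is $\nabla^{Gr}(\sum_j\Phi_ja_j)=\sum_j\Phi_j\otimes_{\mathcal{A}}da_j$, and $\nabla_0:=\nabla^{Gr}-Q^{-1}\circ(\wedge\circ\nabla^{Gr}+d)$, a connection with $\wedge\circ\nabla_0+d=0$. *)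

theory Defs
  imports Complex_Main
begin

text \<open>
  The whole differential calculus
  Omega(A) = (+)_j Omega^j is one unital ring of type 'w; the grading is given by
  the subgroups Om j; the product (wedge) is the ring multiplication; A = Om 0
  (a complex algebra via the central ring homomorphism sc : complex => 'w).
  The bimodule structures of the Om j are given by multiplication with A = Om 0.
  E = Om 1.  The tensor product E (x)_A E is an abstract abelian group 't with
  an A-bimodule structure (lmul, rmul) and the canonical map tens.
\<close>

definition subgroup_set :: "'v::ab_group_add set \<Rightarrow> bool" where
  "subgroup_set S \<longleftrightarrow> 0 \<in> S \<and> (\<forall>x\<in>S. \<forall>y\<in>S. x + y \<in> S \<and> - x \<in> S)"

definition diff_calculus :: "(nat \<Rightarrow> 'w::ring_1 set) \<Rightarrow> ('w \<Rightarrow> 'w) \<Rightarrow> (complex \<Rightarrow> 'w) \<Rightarrow> bool" where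
  "diff_calculus Om d sc \<longleftrightarrow>
     (\<forall>j. subgroup_set (Om j)) \<and>
     (\<forall>w. \<exists>N f. (\<forall>j. f j \<in> Om j) \<and> w = (\<Sum>j<N. f j)) \<and>
     (\<forall>N f. (\<forall>j. f j \<in> Om j) \<and> (\<Sum>j<N. f j) = 0 \<longrightarrow> (\<forall>j<N. f j = 0)) \<and>
     1 \<in> Om 0 \<and>
     (\<forall>i j. \<forall>x\<in>Om i. \<forall>y\<in>Om j. x * y \<in> Om (i + j)) \<and>
     sc 1 = 1 \<and>
     (\<forall>c c'. sc (c + c') = sc c + sc c' \<and> sc (c * c') = sc c * sc c') \<and>
     (\<forall>c. sc c \<in> Om 0 \<and> (\<forall>w. sc c * w = w * sc c)) \<and>
     (\<forall>x y. d (x + y) = d x + d y) \<and>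
     (\<forall>c w. d (sc c * w) = sc c * d w) \<and>
     (\<forall>j. \<forall>x\<in>Om j. d x \<in> Om (Suc j)) \<and>
     (\<forall>x. d (d x) = 0) \<and>
     (\<forall>i. \<forall>x\<in>Om i. \<forall>y. d (x * y) = d x * y + (-1) ^ i * x * d y) \<and>
     (\<forall>j. \<forall>w\<in>Om j. \<exists>(m::nat) a b. (\<forall>k<m. b k \<in> Om 0 \<and> (\<forall>i<j. a k i \<in> Om 0)) \<and>
          w = (\<Sum>k<m. prod_list (map (\<lambda>i. d (a k i)) [0..<j]) * b k))"

definition centre :: "'w set \<Rightarrow> ('w \<Rightarrow> 'v \<Rightarrow> 'v) \<Rightarrow> ('v \<Rightarrow> 'w \<Rightarrow> 'v) \<Rightarrow> 'v set \<Rightarrow> 'v set" where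
  "centre A lm rm M = {m \<in> M. \<forall>a\<in>A. lm a m = rm m a}"

text \<open>Since all modules occurring here are
  complex vector spaces (C is central in R), and C is a cogenerator for complex
  vector spaces, this characterises the tensor product up to isomorphism.\<close>
definition is_tensor_product ::
  "'r set \<Rightarrow> 'm::ab_group_add set \<Rightarrow> 'n::ab_group_add set \<Rightarrow> ('m \<Rightarrow> 'r \<Rightarrow> 'm) \<Rightarrow> ('r \<Rightarrow> 'n \<Rightarrow> 'n)
    \<Rightarrow> 't::ab_group_add set \<Rightarrow> ('m \<Rightarrow> 'n \<Rightarrow> 't) \<Rightarrow> bool" where
  "is_tensor_product R M N rm lm T \<tau> \<longleftrightarrow>
     (\<forall>x\<in>M. \<forall>y\<in>N. \<tau> x y \<in> T) \<and>
     (\<forall>x\<in>M. \<forall>x'\<in>M. \<forall>y\<in>N. \<tau> (x + x') y = \<tau> x y + \<tau> x' y) \<and>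
     (\<forall>x\<in>M. \<forall>y\<in>N. \<forall>y'\<in>N. \<tau> x (y + y') = \<tau> x y + \<tau> x y') \<and>
     (\<forall>x\<in>M. \<forall>r\<in>R. \<forall>y\<in>N. \<tau> (rm x r) y = \<tau> x (lm r y)) \<and>
     (\<forall>t\<in>T. \<exists>(k::nat) x y. (\<forall>i<k. x i \<in> M \<and> y i \<in> N) \<and> t = (\<Sum>i<k. \<tau> (x i) (y i))) \<and>
     (\<forall>\<beta> :: 'm \<Rightarrow> 'n \<Rightarrow> complex.
        (\<forall>x\<in>M. \<forall>x'\<in>M. \<forall>y\<in>N. \<beta> (x + x') y = \<beta> x y + \<beta> x' y) \<and>
        (\<forall>x\<in>M. \<forall>y\<in>N. \<forall>y'\<in>N. \<beta> x (y + y') = \<beta> x y + \<beta> x y') \<and>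
        (\<forall>x\<in>M. \<forall>r\<in>R. \<forall>y\<in>N. \<beta> (rm x r) y = \<beta> x (lm r y)) \<longrightarrow>
        (\<exists>\<phi>. (\<forall>s\<in>T. \<forall>t\<in>T. \<phi> (s + t) = \<phi> s + \<phi> t) \<and>
             (\<forall>x\<in>M. \<forall>y\<in>N. \<phi> (\<tau> x y) = \<beta> x y)))"

definition tensor_bimodule ::
  "'w::ring_1 set \<Rightarrow> 'w set \<Rightarrow> ('w \<Rightarrow> 't::ab_group_add \<Rightarrow> 't) \<Rightarrow> ('t \<Rightarrow> 'w \<Rightarrow> 't) \<Rightarrow> ('w \<Rightarrow> 'w \<Rightarrow> 't) \<Rightarrow> bool" where
  "tensor_bimodule A E lmul rmul tens \<longleftrightarrow>
     (\<forall>a\<in>A. \<forall>s t. lmul a (s + t) = lmul a s + lmul a t) \<and>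
     (\<forall>a\<in>A. \<forall>b\<in>A. \<forall>t. lmul (a + b) t = lmul a t + lmul b t) \<and>
     (\<forall>a\<in>A. \<forall>b\<in>A. \<forall>t. lmul (a * b) t = lmul a (lmul b t)) \<and>
     (\<forall>t. lmul 1 t = t) \<and>
     (\<forall>a\<in>A. \<forall>s t. rmul (s + t) a = rmul s a + rmul t a) \<and>
     (\<forall>a\<in>A. \<forall>b\<in>A. \<forall>t. rmul t (a + b) = rmul t a + rmul t b) \<and>
     (\<forall>a\<in>A. \<forall>b\<in>A. \<forall>t. rmul t (a * b) = rmul (rmul t a) b) \<and>
     (\<forall>t. rmul t 1 = t) \<and>
     (\<forall>a\<in>A. \<forall>b\<in>A. \<forall>t. lmul a (rmul t b) = rmul (lmul a t) b) \<and>
     (\<forall>a\<in>A. \<forall>x\<in>E. \<forall>y\<in>E. lmul a (tens x y) = tens (a * x) y) \<and>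
     (\<forall>a\<in>A. \<forall>x\<in>E. \<forall>y\<in>E. rmul (tens x y) a = tens x (y * a))"

text \<open>p(A^n) for an n x n matrix p with entries in A: columns vectors indexed by
  nat, with entries in A, zero beyond n, and fixed by p.\<close>
definition proj_image :: "'w::ring_1 set \<Rightarrow> nat \<Rightarrow> (nat \<Rightarrow> nat \<Rightarrow> 'w) \<Rightarrow> (nat \<Rightarrow> 'w) set" where
  "proj_image A n p = {v. (\<forall>i. v i \<in> A) \<and> (\<forall>i\<ge>n. v i = 0) \<and>
                          (\<forall>i<n. v i = (\<Sum>k<n. p i k * v k))}"

text \<open>Phi_j = p(e_j), transported to E by the identification iota : p(A^n) -> E.\<close>
definition Phi :: "nat \<Rightarrow> (nat \<Rightarrow> nat \<Rightarrow> 'w::ring_1) \<Rightarrow> ((nat \<Rightarrow> 'w) \<Rightarrow> 'w) \<Rightarrow> nat \<Rightarrow> 'w" where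
  "Phi n p iota j = iota (\<lambda>i. if i < n then p i j else 0)"

definition grassmann ::
  "'w::ring_1 set \<Rightarrow> ('w \<Rightarrow> 'w) \<Rightarrow> ('w \<Rightarrow> 'w \<Rightarrow> 't::ab_group_add) \<Rightarrow> nat \<Rightarrow> (nat \<Rightarrow> nat \<Rightarrow> 'w)
     \<Rightarrow> ((nat \<Rightarrow> 'w) \<Rightarrow> 'w) \<Rightarrow> 'w \<Rightarrow> 't" where
  "grassmann A d tens n p iota \<omega> =
     (\<Sum>j<n. tens (Phi n p iota j) (d (the_inv_into (proj_image A n p) iota \<omega> j)))"

definition nabla0 ::
  "'w::ring_1 set \<Rightarrow> ('w \<Rightarrow> 'w) \<Rightarrow> ('w \<Rightarrow> 'w \<Rightarrow> 't::ab_group_add) \<Rightarrow> ('t \<Rightarrow> 'w) \<Rightarrow> 't set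
     \<Rightarrow> nat \<Rightarrow> (nat \<Rightarrow> nat \<Rightarrow> 'w) \<Rightarrow> ((nat \<Rightarrow> 'w) \<Rightarrow> 'w) \<Rightarrow> 'w \<Rightarrow> 't" where
  "nabla0 A d tens wedgeT F n p iota \<omega> =
     grassmann A d tens n p iota \<omega>
     - the_inv_into F wedgeT (wedgeT (grassmann A d tens n p iota \<omega>) + d \<omega>)"

definition sigma :: "('t::ab_group_add \<Rightarrow> 't) \<Rightarrow> 't \<Rightarrow> 't" where
  "sigma Psym t = Psym t + Psym t - t"

end

theory Submission
  imports Defs
begin

lemma sum_closed_gen:
  assumes "\<And>x y. P x \<Longrightarrow> P y \<Longrightarrow> P (x + y)" and "P 0" and "\<And>i. i < k \<Longrightarrow> P (f i)"
  shows "P (\<Sum>i<(k::nat). f i)"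
  using assms(3) by (induction k) (auto intro: assms(1,2))

lemma additive_zero:
  fixes f :: "'a::ab_group_add \<Rightarrow> 'b::ab_group_add"
  assumes "\<forall>s t. f (s + t) = f s + f t"
  shows "f 0 = 0"
proof -
  have "f (0 + 0) = f 0 + f 0" using assms by blast
  then show ?thesis by simp
qed

lemma additive_neg:
  fixes f :: "'a::ab_group_add \<Rightarrow> 'b::ab_group_add"
  assumes "\<forall>s t. f (s + t) = f s + f t"
  shows "f (- x) = - f x"
proof -
  have "f (x + - x) = f x + f (- x)" using assms by blast
  then show ?thesis using additive_zero[OF assms] by (simp add: eq_neg_iff_add_eq_0 add.commute)
qed

lemma additive_diff:
  fixes f :: "'a::ab_group_add \<Rightarrow> 'b::ab_group_add"
  assumes "\<forall>s t. f (s + t) = f s + f t"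
  shows "f (x - y) = f x - f y"
  using assms additive_neg[OF assms, of y] by (metis diff_conv_add_uminus)

lemma additive_sum:
  fixes f :: "'a::ab_group_add \<Rightarrow> 'b::ab_group_add"
  assumes "\<forall>s t. f (s + t) = f s + f t"
  shows "f (\<Sum>i<(k::nat). g i) = (\<Sum>i<k. f (g i))"
  by (induction k) (simp_all add: additive_zero[OF assms] assms)

lemma additive_on_sum:
  fixes f :: "'a::ab_group_add \<Rightarrow> 'b::ab_group_add"
  assumes "\<forall>s\<in>S. \<forall>t\<in>S. f (s + t) = f s + f t" and "0 \<in> S"
    and "\<forall>s\<in>S. \<forall>t\<in>S. s + t \<in> S" and "\<forall>i<k. g i \<in> S"
  shows "f (\<Sum>i<(k::nat). g i) = (\<Sum>i<k. f (g i))"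
  using assms(4)
proof (induction k)
  case 0
  have "f (0 + 0) = f 0 + f 0" using assms(1,2) by blast
  then show ?case by simp
next
  case (Suc k)
  have "(\<Sum>i<k. g i) \<in> S" using sum_closed_gen[of "\<lambda>x. x \<in> S"] assms(2,3) Suc.prems by auto
  then show ?case using Suc assms(1) by simp
qed

theorem lemma6p4:
  fixes Om :: "nat \<Rightarrow> 'w::ring_1 set" and d :: "'w \<Rightarrow> 'w" and sc :: "complex \<Rightarrow> 'w"
    and lmul :: "'w \<Rightarrow> 't::ab_group_add \<Rightarrow> 't" and rmul :: "'t \<Rightarrow> 'w \<Rightarrow> 't"
    and tens :: "'w \<Rightarrow> 'w \<Rightarrow> 't" and wedgeT :: "'t \<Rightarrow> 'w"
    and F :: "'t set" and Psym :: "'t \<Rightarrow> 't"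
    and n :: nat and p :: "nat \<Rightarrow> nat \<Rightarrow> 'w" and iota :: "(nat \<Rightarrow> 'w) \<Rightarrow> 'w"
  assumes dc: "diff_calculus Om d sc"
    \<comment> \<open>E (x)_A E as a bimodule, with canonical map tens\<close>
    and bimod: "tensor_bimodule (Om 0) (Om 1) lmul rmul tens"
    and tensor: "is_tensor_product (Om 0) (Om 1) (Om 1) (*) (*) UNIV tens"
    \<comment> \<open>E finitely generated projective: idempotent p in M_n(A), p(A^n) = E\<close>
    and p_entries: "\<forall>i<n. \<forall>j<n. p i j \<in> Om 0"
    and p_idem: "\<forall>i<n. \<forall>j<n. (\<Sum>k<n. p i k * p k j) = p i j"
    and iota_bij: "bij_betw iota (proj_image (Om 0) n p) (Om 1)"
    and iota_add: "\<forall>v\<in>proj_image (Om 0) n p. \<forall>w\<in>proj_image (Om 0) n p. iota (\<lambda>i. v i + w i) = iota v + iota w"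
    and iota_rlin: "\<forall>v\<in>proj_image (Om 0) n p. \<forall>a\<in>Om 0. iota (\<lambda>i. v i * a) = iota v * a"
    \<comment> \<open>(1): E = Z(E) (x)_{Z(A)} A via the multiplication map\<close>
    and cond1: "is_tensor_product (centre (Om 0) (*) (*) (Om 0)) (centre (Om 0) (*) (*) (Om 1)) (Om 0)
                  (*) (*) (Om 1) (*)"
    \<comment> \<open>the induced product wedge : E (x)_A E -> Omega^2\<close>
    and wedge_add: "\<forall>s t. wedgeT (s + t) = wedgeT s + wedgeT t"
    and wedge_tens: "\<forall>x\<in>Om 1. \<forall>y\<in>Om 1. wedgeT (tens x y) = x * y"
    \<comment> \<open>(2)\<close>
    and F_sub: "subgroup_set F"
    and F_right: "\<forall>f\<in>F. \<forall>a\<in>Om 0. rmul f a \<in> F"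
    and dsum: "(\<forall>t. \<exists>k f. wedgeT k = 0 \<and> f \<in> F \<and> t = k + f) \<and> {t. wedgeT t = 0} \<inter> F = {0}"
    and Q_bij: "bij_betw wedgeT F (Om 2)"
    and Q_rlin: "\<forall>f\<in>F. \<forall>a\<in>Om 0. wedgeT (rmul f a) = wedgeT f * a"
    \<comment> \<open>P_sym: the idempotent with image ker(wedge) and kernel F\<close>
    and Psym_add: "\<forall>s t. Psym (s + t) = Psym s + Psym t"
    and Psym_idem: "\<forall>t. Psym (Psym t) = Psym t"
    and Psym_image: "range Psym = {t. wedgeT t = 0}"
    and Psym_kernel: "{t. Psym t = 0} = F"
    \<comment> \<open>(3)\<close>
    and cond3: "\<forall>\<omega>\<in>centre (Om 0) (*) (*) (Om 1). \<forall>\<eta>\<in>centre (Om 0) (*) (*) (Om 1).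
                  sigma Psym (tens \<omega> \<eta>) = tens \<eta> \<omega>"
  shows "\<forall>\<omega>\<in>centre (Om 0) (*) (*) (Om 1).
           d \<omega> \<in> centre (Om 0) (*) (*) (Om 2) \<and>
           nabla0 (Om 0) d tens wedgeT F n p iota \<omega>
             - sigma Psym (nabla0 (Om 0) d tens wedgeT F n p iota \<omega>)
             \<in> centre (Om 0) lmul rmul UNIV"
proof -
  have sg0: "\<forall>j. subgroup_set (Om j)"
    using dc unfolding diff_calculus_def apply (elim conjE) apply assumption done
  have mul0: "\<forall>i j. \<forall>x\<in>Om i. \<forall>y\<in>Om j. x * y \<in> Om (i + j)"
    using dc unfolding diff_calculus_def apply (elim conjE) apply assumption done
  have dOm0: "\<forall>j. \<forall>x\<in>Om j. d x \<in> Om (Suc j)"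
    using dc unfolding diff_calculus_def apply (elim conjE) apply assumption done
  have leib0: "\<forall>i. \<forall>x\<in>Om i. \<forall>y. d (x * y) = d x * y + (-1) ^ i * x * d y"
    using dc unfolding diff_calculus_def apply (elim conjE) apply assumption done
  have sg: "\<And>j. subgroup_set (Om j)" using sg0 by blast
  have mul: "\<And>i j x y. x \<in> Om i \<Longrightarrow> y \<in> Om j \<Longrightarrow> x * y \<in> Om (i + j)" using mul0 by blast
  have dOm: "\<And>j x. x \<in> Om j \<Longrightarrow> d x \<in> Om (Suc j)" using dOm0 by blast
  have leib: "\<And>i x y. x \<in> Om i \<Longrightarrow> d (x * y) = d x * y + (-1) ^ i * x * d y" using leib0 by blast
  have Om0: "\<And>j. 0 \<in> Om j"
    using sg0 unfolding subgroup_set_def by blast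
  have Omadd: "\<And>j x y. x \<in> Om j \<Longrightarrow> y \<in> Om j \<Longrightarrow> x + y \<in> Om j"
    using sg0 unfolding subgroup_set_def by blast
  have Omsum: "\<And>j (k::nat) f. (\<And>i. i < k \<Longrightarrow> f i \<in> Om j) \<Longrightarrow> (\<Sum>i<k. f i) \<in> Om j"
  proof -
    fix j k f assume pr: "\<And>i. i < (k::nat) \<Longrightarrow> f i \<in> Om j"
    show "(\<Sum>i<k. f i) \<in> Om j"
      apply (rule sum_closed_gen[where P="\<lambda>x. x \<in> Om j"])
      using Omadd Om0 pr by auto
  qed
  have mul01: "\<And>a x. a \<in> Om 0 \<Longrightarrow> x \<in> Om 1 \<Longrightarrow> a * x \<in> Om 1"
    using mul by fastforce
  have mul10: "\<And>a x. a \<in> Om 0 \<Longrightarrow> x \<in> Om 1 \<Longrightarrow> x * a \<in> Om 1"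
    using mul by fastforce
  have mul00: "\<And>a x. a \<in> Om 0 \<Longrightarrow> x \<in> Om 0 \<Longrightarrow> x * a \<in> Om 0"
    using mul by fastforce
  have mul11: "\<And>a x. a \<in> Om 1 \<Longrightarrow> x \<in> Om 1 \<Longrightarrow> x * a \<in> Om 2"
    using mul by (metis one_add_one)
  have bm: "(\<forall>a\<in>Om 0. \<forall>s t. lmul a (s + t) = lmul a s + lmul a t)"
     "(\<forall>a\<in>Om 0. \<forall>b\<in>Om 0. \<forall>t. lmul a (rmul t b) = rmul (lmul a t) b)"
     "(\<forall>a\<in>Om 0. \<forall>s t. rmul (s + t) a = rmul s a + rmul t a)"
     "(\<forall>a\<in>Om 0. \<forall>b\<in>Om 0. \<forall>t. rmul t (a * b) = rmul (rmul t a) b)"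
     "(\<forall>a\<in>Om 0. \<forall>x\<in>Om 1. \<forall>y\<in>Om 1. lmul a (tens x y) = tens (a * x) y)"
     "(\<forall>a\<in>Om 0. \<forall>x\<in>Om 1. \<forall>y\<in>Om 1. rmul (tens x y) a = tens x (y * a))"
    by (insert bimod, unfold tensor_bimodule_def, elim conjE, assumption)+
  have ladd: "\<And>a s t. a \<in> Om 0 \<Longrightarrow> lmul a (s + t) = lmul a s + lmul a t" using bm(1) by blast
  have lr: "\<And>a b t. a \<in> Om 0 \<Longrightarrow> b \<in> Om 0 \<Longrightarrow> lmul a (rmul t b) = rmul (lmul a t) b" using bm(2) by blast
  have radd: "\<And>a s t. a \<in> Om 0 \<Longrightarrow> rmul (s + t) a = rmul s a + rmul t a" using bm(3) by blast
  have rmulmul: "\<And>a b t. a \<in> Om 0 \<Longrightarrow> b \<in> Om 0 \<Longrightarrow> rmul t (a * b) = rmul (rmul t a) b" using bm(4) by blast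
  have ltens: "\<And>a x y. a \<in> Om 0 \<Longrightarrow> x \<in> Om 1 \<Longrightarrow> y \<in> Om 1 \<Longrightarrow> lmul a (tens x y) = tens (a * x) y" using bm(5) by blast
  have rtens: "\<And>a x y. a \<in> Om 0 \<Longrightarrow> x \<in> Om 1 \<Longrightarrow> y \<in> Om 1 \<Longrightarrow> rmul (tens x y) a = tens x (y * a)" using bm(6) by blast
  have tp: "\<forall>x\<in>Om 1. \<forall>y\<in>Om 1. \<forall>y'\<in>Om 1. tens x (y + y') = tens x y + tens x y'"
    "\<forall>x\<in>Om 1. \<forall>x'\<in>Om 1. \<forall>y\<in>Om 1. tens (x + x') y = tens x y + tens x' y"
    "\<forall>x\<in>Om 1. \<forall>r\<in>Om 0. \<forall>y\<in>Om 1. tens (x * r) y = tens x (r * y)"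
    "\<forall>t\<in>UNIV. \<exists>(k::nat) x y. (\<forall>i<k. x i \<in> Om 1 \<and> y i \<in> Om 1) \<and> t = (\<Sum>i<k. tens (x i) (y i))"
    by (insert tensor, unfold is_tensor_product_def, elim conjE, assumption)+
  have tadd2: "\<And>x y y'. x \<in> Om 1 \<Longrightarrow> y \<in> Om 1 \<Longrightarrow> y' \<in> Om 1 \<Longrightarrow> tens x (y + y') = tens x y + tens x y'"
    using tp(1) by blast
  have tadd1: "\<And>x x' y. x \<in> Om 1 \<Longrightarrow> x' \<in> Om 1 \<Longrightarrow> y \<in> Om 1 \<Longrightarrow> tens (x + x') y = tens x y + tens x' y"
    using tp(2) by blast
  have tbal: "\<And>x r y. x \<in> Om 1 \<Longrightarrow> r \<in> Om 0 \<Longrightarrow> y \<in> Om 1 \<Longrightarrow> tens (x * r) y = tens x (r * y)"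
    using tp(3) by blast
  have tspan: "\<And>t. \<exists>(k::nat) x y. (\<forall>i<k. x i \<in> Om 1 \<and> y i \<in> Om 1) \<and> t = (\<Sum>i<k. tens (x i) (y i))"
    using tp(4) by blast
  have c1: "\<forall>t\<in>Om 1. \<exists>(k::nat) x y. (\<forall>i<k. x i \<in> centre (Om 0) (*) (*) (Om 1) \<and> y i \<in> Om 0) \<and> t = (\<Sum>i<k. x i * y i)"
    using cond1 unfolding is_tensor_product_def apply (elim conjE) apply assumption done
  have c1span: "\<And>t. t \<in> Om 1 \<Longrightarrow> \<exists>(k::nat) x y. (\<forall>i<k. x i \<in> centre (Om 0) (*) (*) (Om 1) \<and> y i \<in> Om 0) \<and> t = (\<Sum>i<k. x i * y i)"
    using c1 by blast
  have cen: "\<And>w. w \<in> centre (Om 0) (*) (*) (Om 1) \<longleftrightarrow> w \<in> Om 1 \<and> (\<forall>a\<in>Om 0. a * w = w * a)"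
    unfolding centre_def by blast
  have Pran: "\<And>t. wedgeT (Psym t) = 0" using Psym_image by blast
  have ranP: "\<And>t. wedgeT t = 0 \<Longrightarrow> Psym t = t"
  proof -
    fix t assume "wedgeT t = 0"
    then obtain s where "t = Psym s" using Psym_image by (metis (mono_tags) image_iff mem_Collect_eq)
    then show "Psym t = t" using Psym_idem by simp
  qed
  have Fker: "\<And>t. t \<in> F \<longleftrightarrow> Psym t = 0" using Psym_kernel by blast
  have Finj: "\<And>x y. x \<in> F \<Longrightarrow> y \<in> F \<Longrightarrow> wedgeT x = wedgeT y \<Longrightarrow> x = y"
    using Q_bij unfolding bij_betw_def inj_on_def by blast
  have Pdiff: "\<And>x y. Psym (x - y) = Psym x - Psym y" using additive_diff Psym_add by blast
  have wdiff: "\<And>x y. wedgeT (x - y) = wedgeT x - wedgeT y" using additive_diff wedge_add by blast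
  have GF: "\<And>t. t - Psym t \<in> F" using Fker Pdiff Psym_idem by simp
  have Gw: "\<And>t. wedgeT (t - Psym t) = wedgeT t" using wdiff Pran by simp
  have sigma_add: "\<And>s t. sigma Psym (s + t) = sigma Psym s + sigma Psym t"
    unfolding sigma_def using Psym_add by (simp add: algebra_simps)
  have f1: "\<And>a t. a \<in> Om 0 \<Longrightarrow> wedgeT (lmul a t) = a * wedgeT t"
  proof -
    fix a t assume a: "a \<in> Om 0"
    obtain k :: nat and x y where xy: "\<forall>i<k. x i \<in> Om 1 \<and> y i \<in> Om 1" and t: "t = (\<Sum>i<k. tens (x i) (y i))"
      using tspan by blast
    have "lmul a t = (\<Sum>i<k. lmul a (tens (x i) (y i)))"
      unfolding t by (rule additive_sum) (use ladd a in blast)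
    also have "\<dots> = (\<Sum>i<k. tens (a * x i) (y i))" using ltens a xy by simp
    finally have "wedgeT (lmul a t) = (\<Sum>i<k. wedgeT (tens (a * x i) (y i)))"
      using additive_sum[OF wedge_add] by simp
    also have "\<dots> = (\<Sum>i<k. a * (x i * y i))" using wedge_tens xy mul01 a by (simp add: mult.assoc)
    also have "\<dots> = a * (\<Sum>i<k. wedgeT (tens (x i) (y i)))" using wedge_tens xy by (simp add: sum_distrib_left)
    also have "\<dots> = a * wedgeT t" unfolding t using additive_sum[OF wedge_add] by simp
    finally show "wedgeT (lmul a t) = a * wedgeT t" .
  qed
  have f4: "\<And>a t. a \<in> Om 0 \<Longrightarrow> wedgeT (rmul t a) = wedgeT t * a"
  proof -
    fix a t assume a: "a \<in> Om 0"
    obtain k :: nat and x y where xy: "\<forall>i<k. x i \<in> Om 1 \<and> y i \<in> Om 1" and t: "t = (\<Sum>i<k. tens (x i) (y i))"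
      using tspan by blast
    have "rmul t a = (\<Sum>i<k. rmul (tens (x i) (y i)) a)"
      unfolding t by (rule additive_sum) (use radd a in blast)
    also have "\<dots> = (\<Sum>i<k. tens (x i) (y i * a))" using rtens a xy by simp
    finally have "wedgeT (rmul t a) = (\<Sum>i<k. wedgeT (tens (x i) (y i * a)))"
      using additive_sum[OF wedge_add] by simp
    also have "\<dots> = (\<Sum>i<k. (x i * y i) * a)" using wedge_tens xy mul10 a by (simp add: mult.assoc)
    also have "\<dots> = (\<Sum>i<k. wedgeT (tens (x i) (y i))) * a" using wedge_tens xy by (simp add: sum_distrib_right)
    also have "\<dots> = wedgeT t * a" unfolding t using additive_sum[OF wedge_add] by simp
    finally show "wedgeT (rmul t a) = wedgeT t * a" .
  qed
  have f2: "\<And>t. wedgeT t \<in> Om 2"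
  proof -
    fix t
    obtain k :: nat and x y where xy: "\<forall>i<k. x i \<in> Om 1 \<and> y i \<in> Om 1" and t: "t = (\<Sum>i<k. tens (x i) (y i))"
      using tspan by blast
    have "wedgeT t = (\<Sum>i<k. x i * y i)" unfolding t using additive_sum[OF wedge_add] wedge_tens xy by simp
    also have "\<dots> \<in> Om 2" by (rule Omsum) (use mul11 xy in blast)
    finally show "wedgeT t \<in> Om 2" .
  qed
  have rneg: "\<And>a t. a \<in> Om 0 \<Longrightarrow> rmul (- t) a = - rmul t a"
  proof -
    fix a t assume a: "a \<in> Om 0"
    have "\<forall>s t. rmul (s + t) a = rmul s a + rmul t a" using radd a by blast
    then show "rmul (- t) a = - rmul t a" by (rule additive_neg)
  qed
  have Pr: "\<And>a t. a \<in> Om 0 \<Longrightarrow> Psym (rmul t a) = rmul (Psym t) a"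
  proof -
    fix a t assume a: "a \<in> Om 0"
    have "rmul t a = rmul (Psym t) a + rmul (t - Psym t) a" using radd[OF a, of "Psym t" "t - Psym t"] by simp
    moreover have "Psym (rmul (Psym t) a) = rmul (Psym t) a" using ranP f4 a Pran by simp
    moreover have "Psym (rmul (t - Psym t) a) = 0" using F_right GF a Fker by blast
    ultimately show "Psym (rmul t a) = rmul (Psym t) a" using Psym_add by simp
  qed
  have sigr: "\<And>a t. a \<in> Om 0 \<Longrightarrow> sigma Psym (rmul t a) = rmul (sigma Psym t) a"
  proof -
    fix a t assume a: "a \<in> Om 0"
    have "rmul (sigma Psym t) a = rmul (Psym t + Psym t) a + rmul (- t) a"
      unfolding sigma_def using radd[OF a, of "Psym t + Psym t" "- t"] by simp
    also have "\<dots> = rmul (Psym t) a + rmul (Psym t) a - rmul t a"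
      using radd[OF a] rneg[OF a] by simp
    also have "\<dots> = sigma Psym (rmul t a)" unfolding sigma_def using Pr[OF a] by simp
    finally show "sigma Psym (rmul t a) = rmul (sigma Psym t) a" by simp
  qed
  have ctens: "\<And>b w e. b \<in> Om 0 \<Longrightarrow> w \<in> centre (Om 0) (*) (*) (Om 1) \<Longrightarrow> e \<in> centre (Om 0) (*) (*) (Om 1)
      \<Longrightarrow> lmul b (tens w e) = rmul (tens w e) b"
  proof -
    fix b w e assume b: "b \<in> Om 0" and w: "w \<in> centre (Om 0) (*) (*) (Om 1)" and e: "e \<in> centre (Om 0) (*) (*) (Om 1)"
    have "lmul b (tens w e) = tens (b * w) e" using ltens b w e cen by blast
    also have "\<dots> = tens (w * b) e" using w b cen by simp
    also have "\<dots> = tens w (b * e)" using tbal w b e cen by blast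
    also have "\<dots> = tens w (e * b)" using e b cen by simp
    also have "\<dots> = rmul (tens w e) b" using rtens b w e cen by simp
    finally show "lmul b (tens w e) = rmul (tens w e) b" .
  qed
  have sigma0: "sigma Psym 0 = 0" unfolding sigma_def using additive_zero[OF Psym_add] by simp
  have sigl: "\<And>b t. b \<in> Om 0 \<Longrightarrow> sigma Psym (lmul b t) = lmul b (sigma Psym t)"
  proof -
    fix b t assume b: "b \<in> Om 0"
    have laddb: "\<forall>s t. lmul b (s + t) = lmul b s + lmul b t" using ladd b by blast
    define L where "L t \<longleftrightarrow> sigma Psym (lmul b t) = lmul b (sigma Psym t)" for t
    have Ladd: "\<And>s t. L s \<Longrightarrow> L t \<Longrightarrow> L (s + t)" unfolding L_def using sigma_add laddb by simp
    have L0: "L 0" unfolding L_def using additive_zero[OF laddb] sigma0 by simp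
    have Lsum: "\<And>(k::nat) f. (\<And>i. i < k \<Longrightarrow> L (f i)) \<Longrightarrow> L (\<Sum>i<k. f i)"
    proof -
      fix k :: nat and f assume pr: "\<And>i. i < k \<Longrightarrow> L (f i)"
      show "L (\<Sum>i<k. f i)"
        apply (rule sum_closed_gen[where P=L]) using Ladd L0 pr by auto
    qed
    have Li: "L (rmul (tens w e) c)" if w: "w \<in> centre (Om 0) (*) (*) (Om 1)"
      and e: "e \<in> centre (Om 0) (*) (*) (Om 1)" and c: "c \<in> Om 0" for w e c
    proof -
      have bc: "b * c \<in> Om 0" using mul00 b c by blast
      have s1: "sigma Psym (tens w e) = tens e w" using cond3 w e by blast
      have k1: "lmul b (rmul (tens w e) c) = rmul (tens w e) (b * c)"
        using lr[OF b c] ctens[OF b w e] rmulmul[OF b c] by simp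
      have k2: "lmul b (rmul (tens e w) c) = rmul (tens e w) (b * c)"
        using lr[OF b c] ctens[OF b e w] rmulmul[OF b c] by simp
      have "sigma Psym (lmul b (rmul (tens w e) c)) = rmul (tens e w) (b * c)"
        using k1 sigr[OF bc] s1 by simp
      also have "\<dots> = lmul b (sigma Psym (rmul (tens w e) c))" using k2 sigr[OF c] s1 by simp
      finally show ?thesis unfolding L_def .
    qed
    have Lii: "L (tens w y)" if w: "w \<in> centre (Om 0) (*) (*) (Om 1)" and y: "y \<in> Om 1" for w y
    proof -
      obtain k :: nat and x z where xz: "\<forall>i<k. x i \<in> centre (Om 0) (*) (*) (Om 1) \<and> z i \<in> Om 0"
        and yk: "y = (\<Sum>i<k. x i * z i)" using c1span y by blast
      have w1: "w \<in> Om 1" using w cen by blast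
      have xz1: "\<forall>i<k. x i * z i \<in> Om 1" using xz cen mul10 by blast
      have "tens w y = (\<Sum>i<k. tens w (x i * z i))" unfolding yk
        apply (rule additive_on_sum[where S="Om 1"])
        using tadd2[OF w1] Om0 Omadd xz1 by blast+
      also have "\<dots> = (\<Sum>i<k. rmul (tens w (x i)) (z i))"
        apply (rule sum.cong[OF refl]) using rtens w1 xz cen by simp
      finally have ty: "tens w y = (\<Sum>i<k. rmul (tens w (x i)) (z i))" .
      show ?thesis unfolding ty by (rule Lsum) (use Li w xz in blast)
    qed
    have Liii: "L (tens x y)" if x: "x \<in> Om 1" and y: "y \<in> Om 1" for x y
    proof -
      obtain k :: nat and w z where wz: "\<forall>i<k. w i \<in> centre (Om 0) (*) (*) (Om 1) \<and> z i \<in> Om 0"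
        and xk: "x = (\<Sum>i<k. w i * z i)" using c1span x by blast
      have wz1: "\<forall>i<k. w i * z i \<in> Om 1" using wz cen mul10 by blast
      have "tens x y = (\<Sum>i<k. tens (w i * z i) y)" unfolding xk
        apply (rule additive_on_sum[where S="Om 1" and f="\<lambda>x. tens x y"])
        using tadd1 y Om0 Omadd wz1 by blast+
      also have "\<dots> = (\<Sum>i<k. tens (w i) (z i * y))"
        apply (rule sum.cong[OF refl]) using tbal y wz cen by simp
      finally have tx: "tens x y = (\<Sum>i<k. tens (w i) (z i * y))" .
      show ?thesis unfolding tx by (rule Lsum) (use Lii wz mul01 y in blast)
    qed
    obtain k :: nat and x y where xy: "\<forall>i<k. x i \<in> Om 1 \<and> y i \<in> Om 1" and t: "t = (\<Sum>i<k. tens (x i) (y i))"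
      using tspan by blast
    have "L t" unfolding t by (rule Lsum) (use Liii xy in blast)
    then show "sigma Psym (lmul b t) = lmul b (sigma Psym t)" unfolding L_def .
  qed
  show ?thesis
  proof
    fix \<omega> assume w: "\<omega> \<in> centre (Om 0) (*) (*) (Om 1)"
    have w1: "\<omega> \<in> Om 1" and wc: "\<And>a. a \<in> Om 0 \<Longrightarrow> a * \<omega> = \<omega> * a" using w cen by auto
    have dw2: "d \<omega> \<in> Om 2" using dOm[OF w1] by (simp add: numeral_2_eq_2)
    have anti: "\<And>e. e \<in> centre (Om 0) (*) (*) (Om 1) \<Longrightarrow> \<omega> * e + e * \<omega> = 0"
    proof -
      fix e assume e: "e \<in> centre (Om 0) (*) (*) (Om 1)"
      have e1: "e \<in> Om 1" using e cen by blast
      have "wedgeT (sigma Psym (tens \<omega> e)) = e * \<omega>" using cond3 w e wedge_tens w1 e1 by simp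
      moreover have "wedgeT (sigma Psym (tens \<omega> e)) = - (\<omega> * e)"
        unfolding sigma_def using wdiff wedge_add Pran wedge_tens w1 e1 by simp
      ultimately show "\<omega> * e + e * \<omega> = 0" by (metis add.right_inverse)
    qed
    have anti2: "\<And>x. x \<in> Om 1 \<Longrightarrow> \<omega> * x + x * \<omega> = 0"
    proof -
      fix x assume x: "x \<in> Om 1"
      obtain k :: nat and e z where ez: "\<forall>i<k. e i \<in> centre (Om 0) (*) (*) (Om 1) \<and> z i \<in> Om 0"
        and xk: "x = (\<Sum>i<k. e i * z i)" using c1span x by blast
      have l: "\<omega> * x = (\<Sum>i<k. \<omega> * e i * z i)" unfolding xk by (simp add: sum_distrib_left mult.assoc)
      have "x * \<omega> = (\<Sum>i<k. e i * z i * \<omega>)" unfolding xk by (simp add: sum_distrib_right)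
      also have "\<dots> = (\<Sum>i<k. e i * \<omega> * z i)"
      proof (rule sum.cong[OF refl])
        fix i assume "i \<in> {..<k}"
        then have "z i \<in> Om 0" using ez by simp
        then show "e i * z i * \<omega> = e i * \<omega> * z i" using wc by (simp add: mult.assoc)
      qed
      finally have r: "x * \<omega> = (\<Sum>i<k. e i * \<omega> * z i)" .
      have "\<omega> * x + x * \<omega> = (\<Sum>i<k. (\<omega> * e i + e i * \<omega>) * z i)"
        unfolding l r by (simp add: sum.distrib[symmetric] distrib_right)
      also have "\<dots> = 0"
      proof (rule sum.neutral, rule ballI)
        fix i assume "i \<in> {..<k}"
        then have "\<omega> * e i + e i * \<omega> = 0" using anti ez by simp
        then show "(\<omega> * e i + e i * \<omega>) * z i = 0" by simp
      qed
      finally show "\<omega> * x + x * \<omega> = 0" .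
    qed
    have partA: "d \<omega> \<in> centre (Om 0) (*) (*) (Om 2)"
    proof -
      have "\<forall>a\<in>Om 0. a * d \<omega> = d \<omega> * a"
      proof
        fix a assume a: "a \<in> Om 0"
        have da: "d a \<in> Om 1" using dOm[OF a] by simp
        have E1: "d (a * \<omega>) = d a * \<omega> + a * d \<omega>" using leib[OF a, of \<omega>] by simp
        have E2: "d (\<omega> * a) = d \<omega> * a - \<omega> * d a" using leib[OF w1, of a] by simp
        have an: "\<omega> * d a + d a * \<omega> = 0" using anti2 da by blast
        have "a * d \<omega> = d (a * \<omega>) - d a * \<omega>" using E1 by simp
        also have "\<dots> = d (\<omega> * a) - d a * \<omega>" using wc[OF a] by simp
        also have "\<dots> = d \<omega> * a - (\<omega> * d a + d a * \<omega>)" using E2 by (simp add: algebra_simps)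
        also have "\<dots> = d \<omega> * a" using an by simp
        finally show "a * d \<omega> = d \<omega> * a" .
      qed
      then show ?thesis unfolding centre_def using dw2 by blast
    qed
    define g where "g = grassmann (Om 0) d tens n p iota \<omega>"
    define X where "X = wedgeT g + d \<omega>"
    define f where "f = the_inv_into F wedgeT X"
    have X2: "X \<in> Om 2" unfolding X_def using f2 dw2 Omadd by blast
    have fF: "f \<in> F" unfolding f_def using bij_betw_apply[OF bij_betw_the_inv_into[OF Q_bij] X2] .
    have wf: "wedgeT f = X" unfolding f_def using f_the_inv_into_f_bij_betw[OF Q_bij X2] .
    define u where "u = nabla0 (Om 0) d tens wedgeT F n p iota \<omega>"
    have u: "u = g - f" unfolding u_def nabla0_def g_def f_def X_def by simp
    define h where "h = u - Psym u"
    have hF: "h \<in> F" unfolding h_def using GF .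
    have wh: "wedgeT h = - d \<omega>" unfolding h_def using Gw u wdiff wf X_def by simp
    have tgt: "u - sigma Psym u = h + h" unfolding sigma_def h_def by (simp add: algebra_simps)
    have Ph: "Psym h = 0" using hF Fker by blast
    have partB: "h + h \<in> centre (Om 0) lmul rmul UNIV"
    proof -
      have "\<forall>a\<in>Om 0. lmul a (h + h) = rmul (h + h) a"
      proof
        fix a assume a: "a \<in> Om 0"
        have "lmul a h - Psym (lmul a h) = rmul h a"
        proof (rule Finj)
          show "lmul a h - Psym (lmul a h) \<in> F" using GF .
          show "rmul h a \<in> F" using F_right hF a by blast
          have "a * d \<omega> = d \<omega> * a" using partA a unfolding centre_def by blast
          then show "wedgeT (lmul a h - Psym (lmul a h)) = wedgeT (rmul h a)"
            using Gw f1 f4 a wh by simp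
        qed
        note A = this
        have laddb: "\<forall>s t. lmul a (s + t) = lmul a s + lmul a t" using ladd a by blast
        have sh: "sigma Psym h = - h" unfolding sigma_def using Ph by simp
        have "sigma Psym (lmul a h) = - lmul a h"
          using sigl[OF a, of h] sh additive_neg[OF laddb, of h] by simp
        then have "Psym (lmul a h) + Psym (lmul a h) - lmul a h = - lmul a h" unfolding sigma_def .
        then have B: "Psym (lmul a h) + Psym (lmul a h) = 0" by (simp add: diff_eq_eq)
        have "rmul h a + rmul h a = (lmul a h - Psym (lmul a h)) + (lmul a h - Psym (lmul a h))"
          using A by simp
        also have "\<dots> = lmul a h + lmul a h - (Psym (lmul a h) + Psym (lmul a h))"
          by (simp add: algebra_simps)
        finally have "lmul a h + lmul a h = rmul h a + rmul h a" using B by simp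
        then show "lmul a (h + h) = rmul (h + h) a" using ladd radd a by simp
      qed
      then show ?thesis unfolding centre_def by blast
    qed
    show "d \<omega> \<in> centre (Om 0) (*) (*) (Om 2) \<and>
           nabla0 (Om 0) d tens wedgeT F n p iota \<omega>
             - sigma Psym (nabla0 (Om 0) d tens wedgeT F n p iota \<omega>)
             \<in> centre (Om 0) lmul rmul UNIV"
      using partA partB tgt unfolding u_def by simp
  qed
qed

end
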